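(* Let $q$ be odd, let $C_1,C_2$ be linear codes of length $n$ over $\mathbb{F}_q$, let $C=\{[\mathbf{u}+\mathbf{v},\mathbf{u}-\mathbf{v}] : \mathbf{u}\in C_1,\mathbf{v}\in C_2\}\subseteq\mathbb{F}_q^{2n}$, and let $1\le b\le n$. Then: (a) $d_b(C)\ge\min\{2d_b(C_1),\,d_b(C_2)\}$; (b) $d_b(C)\ge\min\{d_b(C_1),\,2d_b(C_2)\}$; (c) $\min\{d_b(C_1),d_b(C_2)\}\le d_b(C)\le\min\{2d_b(C_1),\,2d_b(C_2)\}$; (d) if there exist $\mathbf{x}\in C_1\cap C_2$ and a hole $H\in\mathbb{H}(\chi_1(\mathbf{x}))$ such that $w_b(\mathbf{x})=\min\{d_b(C_1),d_b(C_2)\}$, $|H|\ge b-1$, and $\{1,n\}\cap H\ne\emptyset$, then $d_b(C)=\min\{d_b(C_1),d_b(C_2)\}$.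
   Context: For $\mathbf{x}\in\mathbb{F}_q^L$ and $1\le b\le L$, $\chi_b(\mathbf{x})=\{i\in\{1,\dots,L\}:(x_i,\dots,x_{i+b-1})\ne\mathbf{0}\}$ with indices mod $L$, $w_b(\mathbf{x})=|\chi_b(\mathbf{x})|$, and for a linear code $C$, $d_b(C)=\min_{\mathbf{0}\ne\mathbf{c}\in C}w_b(\mathbf{c})$; $\chi_1$ is the Hamming support. For $J\subseteq\mathbb{Z}_n=\{1,\dots,n\}$, a hole of $J$ of size $h\ge1$ is a set $\{a+1,\dots,a+h\}\subseteq\mathbb{Z}_n\setminus J$ (indices mod $n$) with $a,a+h+1\in J$; $\mathbb{H}(J)$ is the set of holes of $J$. *)

theory Defs
  imports Main
begin

text \<open>Vectors in F_q^L are lists of length L, positions indexed 0..L-1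
  (paper index i corresponds to list index i-1); indices are taken mod L.\<close>

definition nonzero_vec :: "'a::zero list \<Rightarrow> bool" where
  "nonzero_vec x \<longleftrightarrow> (\<exists>i<length x. x ! i \<noteq> 0)"

definition chi :: "nat \<Rightarrow> 'a::zero list \<Rightarrow> nat set" where
  "chi b x = {i. i < length x \<and> (\<exists>j<b. x ! ((i + j) mod length x) \<noteq> 0)}"

definition wb :: "nat \<Rightarrow> 'a::zero list \<Rightarrow> nat" where
  "wb b x = card (chi b x)"

definition db :: "nat \<Rightarrow> 'a::zero list set \<Rightarrow> nat" where
  "db b C = Min {wb b c | c. c \<in> C \<and> nonzero_vec c}"

definition linear_code :: "nat \<Rightarrow> 'a::field list set \<Rightarrow> bool" where
  "linear_code n C \<longleftrightarrow> C \<subseteq> {x. length x = n} \<and> replicate n 0 \<in> C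
     \<and> (\<forall>x\<in>C. \<forall>y\<in>C. map2 (+) x y \<in> C)
     \<and> (\<forall>c. \<forall>x\<in>C. map ((*) c) x \<in> C)"

definition holes :: "nat \<Rightarrow> nat set \<Rightarrow> nat set set" where
  "holes n J = {H. \<exists>a h. h \<ge> 1 \<and> a < n \<and> a \<in> J \<and> (a + h + 1) mod n \<in> J
       \<and> H = {(a + k) mod n | k. 1 \<le> k \<and> k \<le> h} \<and> H \<inter> J = {}}"

definition uuv :: "'a::field list set \<Rightarrow> 'a list set \<Rightarrow> 'a list set" where
  "uuv C1 C2 = {map2 (+) u v @ map2 (-) u v | u v. u \<in> C1 \<and> v \<in> C2}"

end

theory Submission
  imports Defs
begin

lemma two_ne_zero_odd:
  assumes "odd (card (UNIV :: 'a::{field,finite} set))"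
  shows "(1::'a) + 1 \<noteq> 0"
proof
  assume h: "(1::'a) + 1 = 0"
  have inv: "\<And>x::'a. x + 1 + 1 = x" using h by (metis add.assoc add_0_right)
  have ne: "\<And>x::'a. x + 1 \<noteq> x" by simp
  have main: "\<And>A::'a set. finite A \<Longrightarrow> (\<forall>x\<in>A. x+1 \<in> A) \<Longrightarrow> even (card A)"
  proof -
    fix A :: "'a set"
    assume "finite A" "\<forall>x\<in>A. x+1 \<in> A"
    then show "even (card A)"
    proof (induction "card A" arbitrary: A rule: less_induct)
      case less
      show ?case
      proof (cases "A = {}")
        case True then show ?thesis by simp
      next
        case False
        then obtain x where x: "x \<in> A" by blast
        define A' where "A' = A - {x, x+1}"
        have x1: "x+1 \<in> A" using less.prems x by blast
        have c2: "card {x, x+1} = 2" using ne[of x] by auto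
        have cA: "card A = card A' + 2"
        proof -
          have "card A' = card A - card {x, x+1}" unfolding A'_def
            using less.prems x x1 by (simp add: card_Diff_subset)
          moreover have "card {x, x+1} \<le> card A" using less.prems x x1 by (intro card_mono) auto
          ultimately show ?thesis using c2 by simp
        qed
        have fA': "finite A'" using less.prems unfolding A'_def by simp
        moreover have "\<forall>y\<in>A'. y+1 \<in> A'"
        proof
          fix y assume y: "y \<in> A'"
          hence "y+1 \<in> A" using less.prems unfolding A'_def by blast
          moreover have "y + 1 \<noteq> x"
          proof
            assume "y+1 = x" hence "y+1+1 = x+1" by simp
            hence "y = x+1" using inv by simp
            thus False using y unfolding A'_def by simp
          qed
          moreover have "y+1 \<noteq> x+1" using y unfolding A'_def by auto
          ultimately show "y+1 \<in> A'" unfolding A'_def by simp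
        qed
        ultimately have "even (card A')" using less.hyps[of A'] cA by simp
        thus ?thesis using cA by simp
      qed
    qed
  qed
  have "even (card (UNIV::'a set))" by (rule main) auto
  thus False using assms by simp
qed

lemma chi_subset: "chi b x \<subseteq> {..<length x}" unfolding chi_def by auto
lemma finite_chi[simp]: "finite (chi b x)" using chi_subset finite_subset by blast
lemma wb_le: "wb b x \<le> length x" unfolding wb_def using card_mono[OF _ chi_subset] by fastforce
lemma chi1: "chi 1 x = {k. k < length x \<and> x!k \<noteq> 0}" by (auto simp: chi_def)

lemma chi_union_mono:
  assumes "length y = length x" "length z = length x"
    "\<And>k. k < length x \<Longrightarrow> x!k \<noteq> 0 \<Longrightarrow> y!k \<noteq> 0 \<or> z!k \<noteq> 0"
  shows "chi b x \<subseteq> chi b y \<union> chi b z"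
proof
  fix i assume "i \<in> chi b x"
  then obtain j where i: "i < length x" "j < b" "x ! ((i+j) mod length x) \<noteq> 0"
    unfolding chi_def by auto
  have "0 < length x" using i(1) by linarith
  then have "(i+j) mod length x < length x" by simp
  then have "y ! ((i+j) mod length x) \<noteq> 0 \<or> z ! ((i+j) mod length x) \<noteq> 0" using assms(3) i by blast
  then show "i \<in> chi b y \<union> chi b z" using i assms(1,2) unfolding chi_def by auto
qed

lemma mod_sub1: "(m::nat) \<le> x \<Longrightarrow> x < 2*m \<Longrightarrow> x mod m = x - m"
  by (simp add: le_mod_geq)
lemma mod_sub2: "2*(m::nat) \<le> x \<Longrightarrow> x < 3*m \<Longrightarrow> x mod (2*m) = x - 2*m"
  by (simp add: le_mod_geq)

lemma wb_double:
  assumes "length a = n" "length c = n" "length x = n" "0 < n"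
    "\<And>k. k < n \<Longrightarrow> (a!k = 0) = (x!k = 0)" "\<And>k. k < n \<Longrightarrow> (c!k = 0) = (x!k = 0)"
  shows "wb b (a @ c) = 2 * wb b x"
proof -
  have pt: "((a@c)!m = 0) = (x!(m mod n) = 0)" if "m < 2*n" for m
  proof (cases "m < n")
    case True then show ?thesis using assms by (simp add: nth_append)
  next
    case False
    then have "m mod n = m - n" using that mod_sub1 by simp
    then show ?thesis using assms False that by (simp add: nth_append)
  qed
  have eq: "chi b (a@c) = {i. i < 2*n \<and> i mod n \<in> chi b x}"
  proof -
    have "(\<exists>j<b. (a@c) ! ((i + j) mod (2*n)) \<noteq> 0) = (\<exists>j<b. x ! ((i mod n + j) mod n) \<noteq> 0)" for i
    proof -
      have "((a@c) ! ((i + j) mod (2*n)) \<noteq> 0) = (x ! ((i mod n + j) mod n) \<noteq> 0)" for j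
      proof -
        have "((i + j) mod (2*n)) mod n = (i+j) mod n" by (simp add: mod_mod_cancel)
        moreover have "(i mod n + j) mod n = (i+j) mod n" by (simp add: mod_add_left_eq)
        ultimately show ?thesis using pt[of "(i + j) mod (2*n)"] assms(4) by simp
      qed
      then show ?thesis by simp
    qed
    moreover have "length (a@c) = 2*n" using assms(1,2) by simp
    ultimately show ?thesis using assms(4) unfolding chi_def assms(3) by auto
  qed
  let ?S = "chi b x"
  have "{i. i < 2*n \<and> i mod n \<in> ?S} = ?S \<union> ((+) n) ` ?S"
  proof (intro set_eqI iffI)
    fix i assume i: "i \<in> {i. i < 2*n \<and> i mod n \<in> ?S}"
    show "i \<in> ?S \<union> ((+) n) ` ?S"
    proof (cases "i < n")
      case True then show ?thesis using i by simp
    next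
      case False
      then have "i = n + (i mod n)" using i mod_sub1[of n i] by simp
      then show ?thesis using i by blast
    qed
  next
    fix i assume "i \<in> ?S \<union> ((+) n) ` ?S"
    then show "i \<in> {i. i < 2*n \<and> i mod n \<in> ?S}" using chi_subset[of b x] assms(3) by auto
  qed
  moreover have "card (?S \<union> ((+) n) ` ?S) = 2 * card ?S"
  proof -
    have "?S \<inter> ((+) n) ` ?S = {}" using chi_subset[of b x] assms(3) by auto
    then have "card (?S \<union> ((+) n) ` ?S) = card ?S + card (((+) n) ` ?S)"
      by (simp add: card_Un_disjoint)
    also have "card (((+) n) ` ?S) = card ?S" by (simp add: card_image)
    finally show ?thesis by simp
  qed
  ultimately show ?thesis unfolding wb_def using eq by simp
qed


lemma union_le:
  assumes "length a = n" "length c = n" "b \<le> n"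
  shows "card (chi b a \<union> chi b c) \<le> wb b (a @ c)"
proof -
  define X where "X = chi b (a@c)"
  have len: "length (a@c) = 2*n" using assms by simp
  have memX: "m \<in> X" if "m < 2*n" "j < b" "(a@c) ! ((m+j) mod (2*n)) \<noteq> 0" for m j
    using that len unfolding X_def chi_def by auto
  have sub: "chi b a \<union> chi b c \<subseteq> (X \<inter> {..<n}) \<union> ((\<lambda>i. i - n) ` (X \<inter> {n..}))"
  proof
    fix i assume "i \<in> chi b a \<union> chi b c"
    then obtain j where ij: "i < n" "j < b" and
       nz: "a ! ((i+j) mod n) \<noteq> 0 \<or> c ! ((i+j) mod n) \<noteq> 0"
      using assms unfolding chi_def by auto
    have jn: "j < n" using ij assms by simp
    have "i \<in> X \<or> i + n \<in> X"
    proof (cases "i + j < n")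
      case True
      have m1: "(i+j) mod (2*n) = i+j" using True by simp
      have m2: "(i+n+j) mod (2*n) = i+n+j" using True by simp
      have m3: "(i+j) mod n = i+j" using True by simp
      show ?thesis
      proof (cases "a ! ((i+j) mod n) \<noteq> 0")
        case True
        then have "(a@c) ! ((i+j) mod (2*n)) \<noteq> 0" using m1 m3 \<open>i+j<n\<close> assms by (simp add: nth_append)
        then show ?thesis using memX[of i j] ij by simp
      next
        case False
        then have "c ! (i+j) \<noteq> 0" using nz m3 by simp
        then have "(a@c) ! ((i+n+j) mod (2*n)) \<noteq> 0" using m2 \<open>i+j<n\<close> assms by (simp add: nth_append)
        then show ?thesis using memX[of "i+n" j] ij by simp
      qed
    next
      case False
      have m1: "(i+j) mod (2*n) = i+j" using ij jn by simp
      have m2: "(i+n+j) mod (2*n) = i+j-n" using False ij jn mod_sub2[of n "i+n+j"] by simp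
      have m3: "(i+j) mod n = i+j-n" using False ij jn mod_sub1[of n "i+j"] by simp
      show ?thesis
      proof (cases "a ! ((i+j) mod n) \<noteq> 0")
        case True
        moreover have "i+j-n < n" using ij jn by simp
        ultimately have "(a@c) ! ((i+n+j) mod (2*n)) \<noteq> 0" using m2 m3 assms by (simp add: nth_append)
        then show ?thesis using memX[of "i+n" j] ij by simp
      next
        case False
        then have "c ! (i+j-n) \<noteq> 0" using nz m3 by simp
        then have "(a@c) ! ((i+j) mod (2*n)) \<noteq> 0" using m1 \<open>\<not> i+j<n\<close> assms by (simp add: nth_append)
        then show ?thesis using memX[of i j] ij by simp
      qed
    qed
    then show "i \<in> (X \<inter> {..<n}) \<union> ((\<lambda>i. i - n) ` (X \<inter> {n..}))"
    proof
      assume "i \<in> X" then show ?thesis using ij by simp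
    next
      assume h: "i + n \<in> X"
      have "i + n \<in> X \<inter> {n..}" using h by simp
      then have "(i+n) - n \<in> (\<lambda>i. i - n) ` (X \<inter> {n..})" by (rule imageI)
      then show ?thesis by simp
    qed
  qed
  have fX: "finite X" unfolding X_def by simp
  have "card (chi b a \<union> chi b c) \<le> card ((X \<inter> {..<n}) \<union> ((\<lambda>i. i - n) ` (X \<inter> {n..})))"
    using sub fX by (intro card_mono) auto
  also have "\<dots> \<le> card (X \<inter> {..<n}) + card ((\<lambda>i. i - n) ` (X \<inter> {n..}))" by (rule card_Un_le)
  also have "\<dots> \<le> card (X \<inter> {..<n}) + card (X \<inter> {n..})" using card_image_le[of "X \<inter> {n..}" "\<lambda>i. i - n"] fX by simp
  also have "\<dots> = card X"
  proof -
    have "X = (X \<inter> {..<n}) \<union> (X \<inter> {n..})" by auto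
    moreover have "card ((X \<inter> {..<n}) \<union> (X \<inter> {n..})) = card (X \<inter> {..<n}) + card (X \<inter> {n..})"
      using fX by (intro card_Un_disjoint) auto
    ultimately show ?thesis by simp
  qed
  finally show ?thesis unfolding wb_def X_def .
qed

lemma db_props:
  assumes "C \<subseteq> {x. length x = L}" "\<exists>c\<in>C. nonzero_vec c"
  shows "(\<forall>c\<in>C. nonzero_vec c \<longrightarrow> db b C \<le> wb b c) \<and> (\<exists>c\<in>C. nonzero_vec c \<and> wb b c = db b C)"
proof -
  let ?S = "{wb b c | c. c \<in> C \<and> nonzero_vec c}"
  have "?S \<subseteq> {..L}" using assms(1) wb_le by fastforce
  then have f: "finite ?S" using finite_subset by blast
  have ne: "?S \<noteq> {}" using assms(2) by blast
  have "Min ?S \<in> ?S" using f ne by (rule Min_in)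
  moreover have "\<forall>c\<in>C. nonzero_vec c \<longrightarrow> Min ?S \<le> wb b c" using f by (auto intro: Min_le)
  ultimately show ?thesis unfolding db_def by auto
qed


lemma hole_core:
  assumes hx: "H \<in> holes n (chi 1 x)" and lx: "length x = n"
    and hb: "card H \<ge> b - 1" and h0: "{0, n-1} \<inter> H \<noteq> {}"
    and p: "i \<le> p" "p < n" "x!p \<noteq> 0"
    and r: "r < n" "x!r \<noteq> 0" "n + r < i + b"
  shows False
proof -
  obtain a h where ah: "h \<ge> 1" "a < n" "a \<in> chi 1 x" "H = {(a + k) mod n | k. 1 \<le> k \<and> k \<le> h}"
    "H \<inter> chi 1 x = {}"
    using hx unfolding holes_def by blast
  have J: "\<And>m. m < n \<Longrightarrow> x!m \<noteq> 0 \<Longrightarrow> m \<in> chi 1 x" using lx unfolding chi1 by simp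
  have notJ: "\<And>k m. 1 \<le> k \<Longrightarrow> k \<le> h \<Longrightarrow> (a+k) mod n = m \<Longrightarrow> m \<notin> chi 1 x"
    using ah(4,5) by blast
  have hn: "h < n"
  proof (rule ccontr)
    assume "\<not> h < n"
    then have "n \<le> h" by linarith
    moreover have "1 \<le> n" using ah(2) by linarith
    ultimately have "(a+n) mod n \<notin> chi 1 x" using notJ[of n "(a+n) mod n"] by blast
    moreover have "(a+n) mod n = a" using ah(2) by simp
    ultimately have "a \<notin> chi 1 x" by simp
    then show False using ah(3) by contradiction
  qed
  have "H = (\<lambda>k. (a+k) mod n) ` {1..h}" unfolding ah(4)
  proof (rule set_eqI)
    fix y
    show "y \<in> {(a+k) mod n |k. 1\<le>k \<and> k\<le>h} \<longleftrightarrow> y \<in> (\<lambda>k. (a+k) mod n) ` {1..h}"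
      unfolding mem_Collect_eq image_iff atLeastAtMost_iff Bex_def by (intro iffI; elim exE conjE; intro exI conjI; assumption)
  qed
  then have "card H \<le> h" using card_image_le[of "{1..h}" "\<lambda>k. (a+k) mod n"] by simp
  then have hb': "b - 1 \<le> h" using hb by linarith
  obtain k0 where k0: "1 \<le> k0" "k0 \<le> h" "(a+k0) mod n = 0 \<or> (a+k0) mod n = n - 1"
  proof -
    have "0 \<in> H \<or> n - 1 \<in> H" using h0 by blast
    then have "\<exists>k. 1 \<le> k \<and> k \<le> h \<and> ((a+k) mod n = 0 \<or> (a+k) mod n = n - 1)"
      unfolding ah(4) mem_Collect_eq by metis
    then obtain k where "1 \<le> k \<and> k \<le> h \<and> ((a+k) mod n = 0 \<or> (a+k) mod n = n - 1)" by (rule exE)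
    then show ?thesis using that by (elim conjE)
  qed
  have pJ: "p \<in> chi 1 x" using J p by blast
  have rJ: "r \<in> chi 1 x" using J r by blast
  show False
  proof (cases "a + h < n")
    case True
    have "a + k0 < n" using True k0 by linarith
    then have "(a+k0) mod n = a + k0" by (rule mod_less)
    then have "a + k0 = n - 1" using k0 by linarith
    then have ahn: "a + h = n - 1" using True k0 by linarith
    have ap: "a < p" using p ahn hb' r by linarith
    have "(a + (p - a)) = p" using ap by linarith
    then have "(a + (p - a)) mod n = p" using p by simp
    moreover have "1 \<le> p - a" "p - a \<le> h" using p ahn ap by linarith+
    ultimately show False using notJ[of "p - a" p] pJ by simp
  next
    case False
    have rr: "a + h - n < r"
    proof (rule ccontr)
      assume c: "\<not> a + h - n < r"
      have "a + (r + n - a) = r + n" using ah(2) by linarith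
      then have "(a + (r + n - a)) mod n = r" using r by simp
      moreover have "1 \<le> r + n - a" "r + n - a \<le> h" using c False ah(2) hn by linarith+
      ultimately show False using notJ[of "r + n - a" r] rJ by simp
    qed
    then have ai: "a < i" using hb' r False by linarith
    have "(a + (p - a)) = p" using ai p by linarith
    then have "(a + (p - a)) mod n = p" using p by simp
    moreover have "1 \<le> p - a" "p - a \<le> h" using ai p False by linarith+
    ultimately show False using notJ[of "p - a" p] pJ by simp
  qed
qed


lemma wb_zero_ext:
  assumes lx: "length x = n" and lw: "length w = 2*n" and b: "b \<le> n"
   and w1: "\<And>k. k<n \<Longrightarrow> w!k = x!k" and w2: "\<And>k. k<n \<Longrightarrow> w!(n+k) = 0"
   and hx: "H \<in> holes n (chi 1 x)" and hb: "card H \<ge> b - 1" and h0: "{0, n-1} \<inter> H \<noteq> {}"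
  shows "wb b w \<le> wb b x"
proof (cases "n = 0")
  case True
  then show ?thesis using wb_le[of b w] lw by simp
next
  case False
  then have n0: "0 < n" by simp
  have wz: "m < n \<and> x!m \<noteq> 0" if "m < 2*n" "w!m \<noteq> 0" for m
  proof (cases "m < n")
    case True then show ?thesis using w1 that by simp
  next
    case False
    then have "m = n + (m - n)" by simp
    moreover have "m - n < n" using that False by simp
    ultimately have "w!m = 0" using w2[of "m-n"] by simp
    then show ?thesis using that by simp
  qed
  have img: "(\<lambda>i. i mod n) ` chi b w \<subseteq> chi b x"
  proof
    fix y assume "y \<in> (\<lambda>i. i mod n) ` chi b w"
    then obtain i where y: "y = i mod n" and "i \<in> chi b w" by blast
    then obtain j where ij: "i < 2*n" "j < b" "w ! ((i+j) mod (2*n)) \<noteq> 0"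
      unfolding chi_def lw by auto
    define m where "m = (i+j) mod (2*n)"
    have "m < 2*n" unfolding m_def using n0 by simp
    then have mx: "m < n" "x!m \<noteq> 0" using wz ij(3) unfolding m_def by auto
    have "(i mod n + j) mod n = (i+j) mod n" by (simp add: mod_add_left_eq)
    also have "\<dots> = m mod n" unfolding m_def by (simp add: mod_mod_cancel)
    also have "\<dots> = m" using mx by simp
    finally have "x ! ((y + j) mod n) \<noteq> 0" using mx y by simp
    moreover have "y < n" using y n0 by simp
    ultimately show "y \<in> chi b x" unfolding chi_def lx using ij(2) by auto
  qed
  have core: False if i: "i < n" "i \<in> chi b w" "i + n \<in> chi b w" for i
  proof -
    obtain j where j: "j < b" "w ! ((i+j) mod (2*n)) \<noteq> 0" using i(2) unfolding chi_def lw by auto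
    have "i + j < 2*n" using i j b by simp
    then have "(i+j) mod (2*n) = i + j" by simp
    then have p: "i + j < n" "x!(i+j) \<noteq> 0" using wz[of "i+j"] j \<open>i+j < 2*n\<close> by auto
    obtain j' where j': "j' < b" "w ! ((i+n+j') mod (2*n)) \<noteq> 0" using i(3) unfolding chi_def lw by auto
    have ge: "2*n \<le> i+n+j'"
    proof (rule ccontr)
      assume "\<not> 2*n \<le> i+n+j'"
      then have "(i+n+j') mod (2*n) = i+n+j'" by simp
      then show False using wz[of "i+n+j'"] j' \<open>\<not> 2*n \<le> i+n+j'\<close> by auto
    qed
    have "i+n+j' < 3*n" using i j' b by simp
    then have "(i+n+j') mod (2*n) = i+n+j' - 2*n" using ge mod_sub2 by blast
    then have r: "i+n+j' - 2*n < n" "x!(i+n+j' - 2*n) \<noteq> 0" using wz[of "i+n+j' - 2*n"] j' ge n0 i(1) b by auto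
    have "n + (i+n+j' - 2*n) < i + b" using ge j' by simp
    then show False using hole_core[OF hx lx hb h0, of i "i+j" "i+n+j' - 2*n"] p r by simp
  qed
  have inj: "inj_on (\<lambda>i. i mod n) (chi b w)"
  proof (rule inj_onI)
    fix i1 i2 assume i1: "i1 \<in> chi b w" and i2: "i2 \<in> chi b w" and eq: "i1 mod n = i2 mod n"
    have l1: "i1 < 2*n" and l2: "i2 < 2*n" using i1 i2 chi_subset[of b w] lw by auto
    have rep: "k = (if k < n then k mod n else n + k mod n)" if "k < 2*n" for k
      using that mod_sub1[of n k] by auto
    show "i1 = i2"
    proof (cases "i1 < n"; cases "i2 < n")
      assume "i1 < n" "i2 < n" then show ?thesis using eq by simp
    next
      assume "\<not> i1 < n" "\<not> i2 < n" then show ?thesis using eq rep[OF l1] rep[OF l2] by simp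
    next
      assume a: "i1 < n" "\<not> i2 < n"
      then have "i2 = i1 + n" using eq rep[OF l2] by simp
      then show ?thesis using core[of i1] a i1 i2 by simp
    next
      assume a: "\<not> i1 < n" "i2 < n"
      then have "i1 = i2 + n" using eq rep[OF l1] by simp
      then show ?thesis using core[of i2] a i1 i2 by simp
    qed
  qed
  show ?thesis unfolding wb_def using card_inj_on_le[OF inj img] by simp
qed


lemma field_two_zero:
  assumes "(1::'a::field) + 1 \<noteq> 0" "x + y = 0" "x - y = (0::'a)"
  shows "x = 0 \<and> y = 0"
proof -
  have yx: "y = x" using assms(3) by simp
  then have "(1+1) * x = 0" using assms(2) by (simp add: distrib_right)
  then have "x = 0" using assms(1) by simp
  then show ?thesis using yx by simp
qed

lemma half_sum:
  assumes "(1::'a::field) + 1 \<noteq> 0"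
  shows "inverse (1+1) * y + inverse (1+1) * y = (y::'a)"
proof -
  have "inverse (1+1) * y + inverse (1+1) * y = (inverse (1+1) * (1+1)) * y"
    by (simp add: distrib_left distrib_right)
  also have "\<dots> = y" using assms by simp
  finally show ?thesis .
qed

theorem mainTheorem11:
  fixes C1 C2 :: "'a::{field,finite} list set" and n b :: nat
  assumes "odd (card (UNIV :: 'a set))"
    and "linear_code n C1" and "linear_code n C2"
    and "\<exists>c\<in>C1. nonzero_vec c" and "\<exists>c\<in>C2. nonzero_vec c"
    and "1 \<le> b" and "b \<le> n"
  shows "db b (uuv C1 C2) \<ge> min (2 * db b C1) (db b C2)
    \<and> db b (uuv C1 C2) \<ge> min (db b C1) (2 * db b C2)
    \<and> min (db b C1) (db b C2) \<le> db b (uuv C1 C2)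
    \<and> db b (uuv C1 C2) \<le> min (2 * db b C1) (2 * db b C2)
    \<and> ((\<exists>x \<in> C1 \<inter> C2. \<exists>H \<in> holes n (chi 1 x).
           wb b x = min (db b C1) (db b C2) \<and> card H \<ge> b - 1
           \<and> {0, n - 1} \<inter> H \<noteq> {})
        \<longrightarrow> db b (uuv C1 C2) = min (db b C1) (db b C2))"
proof -
  define d1 where "d1 = db b C1"
  define d2 where "d2 = db b C2"
  define C where "C = uuv C1 C2"
  have two: "(1::'a)+1 \<noteq> 0" using assms(1) by (rule two_ne_zero_odd)
  have n0: "0 < n" using assms(6,7) by simp
  have L1: "C1 \<subseteq> {x. length x = n}" using assms(2) unfolding linear_code_def by blast
  have L2: "C2 \<subseteq> {x. length x = n}" using assms(3) unfolding linear_code_def by blast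
  have z1: "replicate n 0 \<in> C1" using assms(2) unfolding linear_code_def by blast
  have z2: "replicate n 0 \<in> C2" using assms(3) unfolding linear_code_def by blast
  have P1: "(\<forall>c\<in>C1. nonzero_vec c \<longrightarrow> d1 \<le> wb b c) \<and> (\<exists>c\<in>C1. nonzero_vec c \<and> wb b c = d1)"
    unfolding d1_def using db_props[OF L1 assms(4)] .
  have P2: "(\<forall>c\<in>C2. nonzero_vec c \<longrightarrow> d2 \<le> wb b c) \<and> (\<exists>c\<in>C2. nonzero_vec c \<and> wb b c = d2)"
    unfolding d2_def using db_props[OF L2 assms(5)] .
  have LC: "C \<subseteq> {x. length x = 2*n}" unfolding C_def uuv_def using L1 L2 by (auto simp: subset_iff)
  have memC: "map2 (+) u v @ map2 (-) u v \<in> C" if "u \<in> C1" "v \<in> C2" for u v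
    unfolding C_def uuv_def using that by blast
  have nzv: "(\<forall>k<n. x!k = 0) \<longleftrightarrow> \<not> nonzero_vec x" if "length x = n" for x :: "'a list"
    unfolding nonzero_vec_def using that by auto
  have lower: "min (2*d1) d2 \<le> wb b w \<and> min d1 (2*d2) \<le> wb b w" if w: "w \<in> C" "nonzero_vec w" for w
  proof -
    obtain u v where uv: "w = map2 (+) u v @ map2 (-) u v" "u \<in> C1" "v \<in> C2"
      using w(1) unfolding C_def uuv_def by blast
    have lu: "length u = n" and lv: "length v = n" using uv L1 L2 by auto
    define a where "a = map2 (+) u v"
    define c where "c = map2 (-) u v"
    have la: "length a = n" and lc: "length c = n" unfolding a_def c_def using lu lv by auto
    have an: "a!k = u!k + v!k" "c!k = u!k - v!k" if "k < n" for k
      unfolding a_def c_def using that lu lv by auto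
    have wac: "w = a @ c" unfolding a_def c_def using uv by simp
    have "nonzero_vec u \<or> nonzero_vec v"
    proof (rule ccontr)
      assume "\<not> (nonzero_vec u \<or> nonzero_vec v)"
      then have "\<forall>k<n. u!k = 0" "\<forall>k<n. v!k = 0" using nzv lu lv by auto
      then have "\<forall>k<2*n. w!k = 0" using an la lc unfolding wac by (auto simp: nth_append)
      then show False using w(2) la lc unfolding nonzero_vec_def wac by auto
    qed
    moreover
    {
      assume nv: "\<not> nonzero_vec v" and nu: "nonzero_vec u"
      have v0: "\<forall>k<n. v!k = 0" using nzv lv nv by blast
      have "wb b (a @ c) = 2 * wb b u" by (rule wb_double[OF la lc lu n0]) (simp_all add: an v0)
      moreover have "d1 \<le> wb b u" using P1 nu uv by blast
      ultimately have ?thesis unfolding wac by (simp add: min_def)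
    }
    moreover
    {
      assume nu: "\<not> nonzero_vec u" and nv: "nonzero_vec v"
      have u0: "\<forall>k<n. u!k = 0" using nzv lu nu by blast
      have "wb b (a @ c) = 2 * wb b v" by (rule wb_double[OF la lc lv n0]) (simp_all add: an u0)
      moreover have "d2 \<le> wb b v" using P2 nv uv by blast
      ultimately have ?thesis unfolding wac by (simp add: min_def)
    }
    moreover
    {
      assume nu: "nonzero_vec u" and nv: "nonzero_vec v"
      have U: "card (chi b a \<union> chi b c) \<le> wb b w" unfolding wac using union_le[OF la lc assms(7)] .
      have s: "a!k \<noteq> 0 \<or> c!k \<noteq> 0" if "k < n" "u!k \<noteq> 0 \<or> v!k \<noteq> 0" for k
        using field_two_zero[OF two, of "u!k" "v!k"] an[OF that(1)] that(2) by auto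
      have "chi b u \<subseteq> chi b a \<union> chi b c"
        by (rule chi_union_mono) (use la lc lu s in auto)
      then have "wb b u \<le> card (chi b a \<union> chi b c)" unfolding wb_def by (intro card_mono) auto
      moreover have "chi b v \<subseteq> chi b a \<union> chi b c"
        by (rule chi_union_mono) (use la lc lv s in auto)
      then have "wb b v \<le> card (chi b a \<union> chi b c)" unfolding wb_def by (intro card_mono) auto
      moreover have "d1 \<le> wb b u" using P1 nu uv by blast
      moreover have "d2 \<le> wb b v" using P2 nv uv by blast
      ultimately have ?thesis using U by (simp add: min_def)
    }
    ultimately show ?thesis by blast
  qed
  obtain u1 where u1: "u1 \<in> C1" "nonzero_vec u1" "wb b u1 = d1" using P1 by blast
  obtain v1 where v1: "v1 \<in> C2" "nonzero_vec v1" "wb b v1 = d2" using P2 by blast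
  have lu1: "length u1 = n" using u1 L1 by auto
  have lv1: "length v1 = n" using v1 L2 by auto
  define w1 where "w1 = map2 (+) u1 (replicate n 0) @ map2 (-) u1 (replicate n 0)"
  define w2 where "w2 = map2 (+) (replicate n 0) v1 @ map2 (-) (replicate n 0) v1"
  have w1C: "w1 \<in> C" unfolding w1_def using memC u1 z2 by blast
  have w2C: "w2 \<in> C" unfolding w2_def using memC v1 z1 by blast
  have wbw1: "wb b w1 = 2 * d1" unfolding w1_def using u1(3)[symmetric] lu1
    by (simp only:) (rule wb_double[OF _ _ lu1 n0], simp_all)
  have wbw2: "wb b w2 = 2 * d2" unfolding w2_def using v1(3)[symmetric] lv1
    by (simp only:) (rule wb_double[OF _ _ lv1 n0], simp_all)
  have nzw1: "nonzero_vec w1"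
  proof -
    obtain k where "k < n" "u1!k \<noteq> 0" using u1(2) lu1 unfolding nonzero_vec_def by auto
    then show ?thesis unfolding w1_def nonzero_vec_def using lu1 by (intro exI[of _ k]) (simp add: nth_append)
  qed
  have nzw2: "nonzero_vec w2"
  proof -
    obtain k where "k < n" "v1!k \<noteq> 0" using v1(2) lv1 unfolding nonzero_vec_def by auto
    then show ?thesis unfolding w2_def nonzero_vec_def using lv1 by (intro exI[of _ k]) (simp add: nth_append)
  qed
  have exC: "\<exists>w\<in>C. nonzero_vec w" using w1C nzw1 by blast
  have PC: "(\<forall>c\<in>C. nonzero_vec c \<longrightarrow> db b C \<le> wb b c) \<and> (\<exists>c\<in>C. nonzero_vec c \<and> wb b c = db b C)"
    using db_props[OF LC exC] .
  have up: "db b C \<le> min (2*d1) (2*d2)" using PC w1C w2C nzw1 nzw2 wbw1 wbw2 by fastforce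
  have lo: "min (2*d1) d2 \<le> db b C \<and> min d1 (2*d2) \<le> db b C"
    using PC lower by metis
  have dpart: "db b C = min d1 d2" if hyp: "\<exists>x \<in> C1 \<inter> C2. \<exists>H \<in> holes n (chi 1 x).
           wb b x = min d1 d2 \<and> card H \<ge> b - 1 \<and> {0, n - 1} \<inter> H \<noteq> {}"
  proof -
    obtain x H where x: "x \<in> C1" "x \<in> C2" "H \<in> holes n (chi 1 x)" "wb b x = min d1 d2"
      "card H \<ge> b - 1" "{0, n - 1} \<inter> H \<noteq> {}" using hyp by blast
    have lx: "length x = n" using x L1 by auto
    define hx where "hx = map ((*) (inverse (1+1))) x"
    have hx1: "hx \<in> C1" unfolding hx_def using assms(2) x(1) unfolding linear_code_def by blast
    have hx2: "hx \<in> C2" unfolding hx_def using assms(3) x(2) unfolding linear_code_def by blast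
    define w where "w = map2 (+) hx hx @ map2 (-) hx hx"
    have wC: "w \<in> C" unfolding w_def using memC hx1 hx2 by blast
    have lw: "length w = 2*n" unfolding w_def hx_def using lx by simp
    have e1: "w!k = x!k" if "k < n" for k
      unfolding w_def hx_def using that lx half_sum[OF two] by (simp add: nth_append)
    have e2: "w!(n+k) = 0" if "k < n" for k
      unfolding w_def hx_def using that lx by (simp add: nth_append)
    have "wb b w \<le> wb b x" by (rule wb_zero_ext[OF lx lw assms(7) e1 e2 x(3,5,6)])
    moreover have "nonzero_vec w"
    proof -
      obtain a where "a < n" "a \<in> chi 1 x" using x(3) unfolding holes_def by blast
      then have "a < n" "x!a \<noteq> 0" using lx unfolding chi1 by auto
      then show ?thesis unfolding nonzero_vec_def using lw e1 by (intro exI[of _ a]) simp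
    qed
    ultimately have "db b C \<le> min d1 d2" using PC wC x(4) by fastforce
    moreover have "min d1 d2 \<le> db b C" using lo by linarith
    ultimately show ?thesis by (auto simp: min_def)
  qed
  show ?thesis
    using up lo dpart unfolding C_def d1_def d2_def by auto
qed

end
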